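(* Let $\lambda>0$ and $\mu>0$, and let $i(\cdot)$ and $d(\cdot)$ be probability distributions on $\{1,2,\dots\}$ with $d(1)>0$. Consider the continuous-time Markov chain on sequence lengths $n\in\{0,1,2,\dots\}$ induced by the indel process described in the context: from length $n$ the chain jumps to $n+k$ ($k\ge1$) at rate $(n+1)\lambda i(k)$, and to $n-k$ ($1\le k\le n$) at rate $(n-k+1)\mu d(k)$. Suppose this length process is time reversible with respect to an equilibrium distribution $q$ on $\{0,1,2,\dots\}$, i.e. $q$ is a probability distribution satisfying detailed balance for all these transitions, and $q(n)>0$ for all $n$. Then: (i) $q(x)=r(1-r)^x$ for all $x\in\{0,1,2,\dots\}$, where $1-r=\dfrac{\lambda i(1)}{\mu d(1)}$ and $0<r<1$; (ii) $\dfrac{\lambda}{\mu}=\sum_{k=1}^\infty (1-r)^k d(k)<1$; (iii) $i(k)=\dfrac{\mu}{\lambda}(1-r)^k d(k)$ for all $k\in\{1,2,\dots\}$. Conversely, for any $r\in(0,1)$, any probability distribution $d$ on $\{1,2,\dots\}$ with $d(1)>0$, and any $\mu>0$, defining $\lambda$ by (ii) and $i$ by (iii) yields a probability distribution $i$ on $\{1,2,\dots\}$ and rates for which the length process is reversible with equilibrium distribution $q$ given by (i).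
   Context: Indel model. A sequence of length $n$ has bases numbered $1,\dots,n$ and positions numbered $0,\dots,n$ (base $j$ lies between positions $j-1$ and $j$). An insertion of size $k\ge1$ at position $p\in\{0,\dots,n\}$ adds $k$ bases at that position and occurs at rate $\lambda i(k)$ for each such position. A deletion of size $k$ at position $p\in\{0,\dots,n-1\}$ removes the bases between positions $p$ and $p+k$, is allowed only when $1\le k\le n-p$, and occurs at rate $\mu d(k)$ for each such allowed pair $(p,k)$. Here $i(\cdot)$ and $d(\cdot)$ (the base insertion and deletion fragment size distributions) are probability distributions on the positive integers, and $\lambda,\mu$ are the total insertion and deletion rates per site on an infinitely long sequence. Consequently, a sequence of length $n$ has $n+1$ insertion positions and exactly $n-k+1$ allowed deletion positions for fragments of size $k\le n$. *)

theory Defs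
  imports "HOL-Analysis.Analysis"
begin

(* A probability distribution on the positive integers {1,2,...}, as a function on nat
   with no mass at 0. *)
definition pos_int_dist :: "(nat \<Rightarrow> real) \<Rightarrow> bool" where
  "pos_int_dist p \<longleftrightarrow> p 0 = 0 \<and> (\<forall>k. 0 \<le> p k) \<and> p sums 1"

definition nat_dist :: "(nat \<Rightarrow> real) \<Rightarrow> bool" where
  "nat_dist q \<longleftrightarrow> (\<forall>n. 0 \<le> q n) \<and> q sums 1"

definition ins_rate :: "real \<Rightarrow> (nat \<Rightarrow> real) \<Rightarrow> nat \<Rightarrow> nat \<Rightarrow> real" where
  "ins_rate lam i n k = real (n + 1) * lam * i k"   (* n -> n+k, k >= 1 *)

definition del_rate :: "real \<Rightarrow> (nat \<Rightarrow> real) \<Rightarrow> nat \<Rightarrow> nat \<Rightarrow> real" where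
  "del_rate mu d n k = real (n - k + 1) * mu * d k"   (* n -> n-k, 1 <= k <= n *)

definition length_reversible ::
  "real \<Rightarrow> real \<Rightarrow> (nat \<Rightarrow> real) \<Rightarrow> (nat \<Rightarrow> real) \<Rightarrow> (nat \<Rightarrow> real) \<Rightarrow> bool" where
  "length_reversible lam mu i d q \<longleftrightarrow>
     nat_dist q \<and>
     (\<forall>n k. 1 \<le> k \<longrightarrow> q n * ins_rate lam i n k = q (n + k) * del_rate mu d (n + k) k)"

end

theory Submission
  imports Defs
begin

lemma part1:
  fixes lam mu :: real and i d q :: "nat \<Rightarrow> real"
  assumes lam: "lam > 0" and mu: "mu > 0" and pi: "pos_int_dist i" and pd: "pos_int_dist d"
    and d1: "d 1 > 0" and rev: "length_reversible lam mu i d q" and qpos: "\<forall>n. q n > 0"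
  shows "(let r = 1 - lam * i 1 / (mu * d 1) in
         0 < r \<and> r < 1 \<and>
         (\<forall>x. q x = r * (1 - r) ^ x) \<and>
         (\<lambda>k. (1 - r) ^ k * d k) sums (lam / mu) \<and> lam / mu < 1 \<and>
         (\<forall>k\<ge>1. i k = mu / lam * (1 - r) ^ k * d k))"
proof -
  have db: "q n * lam * i k = q (n+k) * mu * d k" if "1 \<le> k" for n k
  proof -
    have "q n * ins_rate lam i n k = q (n + k) * del_rate mu d (n + k) k"
      using rev that unfolding length_reversible_def by blast
    hence "real (n+1) * (q n * lam * i k) = real (n+1) * (q (n+k) * mu * d k)"
      unfolding ins_rate_def del_rate_def by (simp add: algebra_simps)
    thus ?thesis by simp
  qed
  define c where "c = lam * i 1 / (mu * d 1)"
  have step: "q (Suc n) = c * q n" for n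
  proof -
    have "q n * lam * i 1 = q (Suc n) * mu * d 1" using db[of 1 n] by simp
    thus ?thesis unfolding c_def using mu d1 by (simp add: field_simps)
  qed
  have qn: "q n = q 0 * c ^ n" for n
    by (induction n) (auto simp: step)
  have q0: "q 0 > 0" using qpos by auto
  have cpos: "c > 0"
    using qpos[rule_format, of 1] qn[of 1] q0 by (simp add: zero_less_mult_iff)
  have qs: "q sums 1" using rev unfolding length_reversible_def nat_dist_def by blast
  have qf: "q = (\<lambda>n. q 0 * c ^ n)" by (rule ext) (rule qn)
  have "summable (\<lambda>n. q 0 * c ^ n)" using sums_summable[OF qs] by (subst (asm) qf)
  hence "summable (\<lambda>n. c ^ n)" using summable_mult[of "\<lambda>n. q 0 * c^n" "1 / q 0"] q0
    by simp
  hence c1: "c < 1" using cpos by simp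
  have "(\<lambda>n. q 0 * c ^ n) sums (q 0 * (1 / (1 - c)))"
    using geometric_sums[of c] c1 cpos by (intro sums_mult) simp
  hence "q sums (q 0 / (1 - c))" by (subst qf) simp
  hence "q 0 / (1 - c) = 1" using qs sums_unique2 by blast
  hence q0e: "q 0 = 1 - c" using c1 by (simp add: field_simps)
  have qx: "\<forall>x. q x = (1 - c) * c ^ x" using qn q0e by metis
  define r where "r = 1 - c"
  have rc: "1 - r = c" unfolding r_def by simp
  have ik: "i k = mu / lam * c ^ k * d k" for k
  proof (cases "k = 0")
    case True thus ?thesis using pi pd unfolding pos_int_dist_def by simp
  next
    case False
    hence "q 0 * lam * i k = q k * mu * d k" using db[of k 0] by simp
    hence "q 0 * lam * i k = q 0 * (c ^ k * mu * d k)" by (simp only: qn[of k] mult_ac)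
    hence "lam * i k = c ^ k * mu * d k" using q0 by simp
    thus ?thesis using lam by (simp add: field_simps)
  qed
  have is1: "i sums 1" using pi unfolding pos_int_dist_def by blast
  have "(\<lambda>k. lam / mu * i k) sums (lam / mu * 1)" using is1 by (rule sums_mult)
  moreover have "(\<lambda>k. lam / mu * i k) = (\<lambda>k. c ^ k * d k)"
    using lam mu by (auto simp: ik field_simps)
  ultimately have csum: "(\<lambda>k. c ^ k * d k) sums (lam / mu)" by simp
  have dsum: "d sums 1" and dnn: "\<And>k. d k \<ge> 0" using pd unfolding pos_int_dist_def by auto
  have "0 < (\<Sum>k. d k - c ^ k * d k)"
  proof (subst suminf_pos_iff)
    show "summable (\<lambda>k. d k - c ^ k * d k)"
      using dsum csum by (intro summable_diff) (auto simp: sums_iff)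
    show "0 \<le> d k - c ^ k * d k" for k
    proof -
      have "c ^ k \<le> 1" using cpos c1 by (simp add: power_le_one)
      thus ?thesis using dnn[of k] mult_right_mono[of "c^k" 1 "d k"] by simp
    qed
    show "\<exists>k. 0 < d k - c ^ k * d k"
      by (rule exI[of _ 1]) (use d1 c1 in simp)
  qed
  also have "(\<Sum>k. d k - c ^ k * d k) = 1 - lam / mu"
    using dsum csum by (metis sums_diff sums_unique)
  finally have lm: "lam / mu < 1" by simp
  show ?thesis
    unfolding Let_def c_def[symmetric] r_def[symmetric] rc
    using cpos c1 r_def qx csum lm ik by auto
qed

lemma part2:
  fixes r mu :: real and d :: "nat \<Rightarrow> real"
  assumes r0: "0 < r" and r1: "r < 1" and pd: "pos_int_dist d" and d1: "d 1 > 0" and mu: "mu > 0"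
  shows "(let lam = mu * (\<Sum>k. (1 - r) ^ k * d k);
           i = (\<lambda>k. if k = 0 then 0 else mu / lam * (1 - r) ^ k * d k)
       in lam > 0 \<and> pos_int_dist i \<and>
          length_reversible lam mu i d (\<lambda>x. r * (1 - r) ^ x))"
proof -
  define c where "c = 1 - r"
  have c0: "c > 0" and c1: "c < 1" using r0 r1 by (auto simp: c_def)
  have dsum: "d sums 1" and dnn: "\<And>k. d k \<ge> 0" and d0: "d 0 = 0"
    using pd unfolding pos_int_dist_def by auto
  have summ: "summable (\<lambda>k. c ^ k * d k)"
  proof (rule summable_comparison_test'[where g=d and N=0])
    show "summable d" using dsum by (simp add: sums_iff)
    show "norm (c ^ k * d k) \<le> d k" for k
    proof -
      have "c ^ k \<le> 1" using c0 c1 by (simp add: power_le_one)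
      thus ?thesis using dnn[of k] c0 mult_right_mono[of "c^k" 1 "d k"] by simp
    qed
  qed
  define S where "S = (\<Sum>k. c ^ k * d k)"
  have Spos: "S > 0" unfolding S_def
  proof (subst suminf_pos_iff[OF summ])
    show "0 \<le> c ^ k * d k" for k using c0 dnn by simp
    show "\<exists>k. 0 < c ^ k * d k" by (rule exI[of _ 1]) (use c0 d1 in simp)
  qed
  define lam where "lam = mu * S"
  have lpos: "lam > 0" using Spos mu by (simp add: lam_def)
  define i where "i = (\<lambda>k. if k = 0 then 0 else mu / lam * c ^ k * d k)"
  have ieq: "i = (\<lambda>k. c ^ k * d k / S)"
    using mu Spos by (auto simp: i_def lam_def d0 fun_eq_iff)
  have ipd: "pos_int_dist i"
    unfolding pos_int_dist_def
  proof (intro conjI allI)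
    show "i 0 = 0" by (simp add: i_def)
    show "0 \<le> i k" for k using c0 dnn Spos by (simp add: ieq)
    have "(\<lambda>k. c ^ k * d k / S) sums (S / S)"
      using summ unfolding S_def by (intro sums_divide) (simp add: summable_sums)
    thus "i sums 1" using Spos by (simp add: ieq)
  qed
  have nd: "nat_dist (\<lambda>x. r * c ^ x)"
    unfolding nat_dist_def
  proof (intro conjI allI)
    show "0 \<le> r * c ^ n" for n using r0 c0 by simp
    have "(\<lambda>x. r * c ^ x) sums (r * (1 / (1 - c)))"
      using geometric_sums[of c] c0 c1 by (intro sums_mult) simp
    thus "(\<lambda>x. r * c ^ x) sums 1" using r0 by (simp add: c_def)
  qed
  have lr: "length_reversible lam mu i d (\<lambda>x. r * c ^ x)"
    unfolding length_reversible_def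
  proof (intro conjI allI impI nd)
    fix n k :: nat assume k: "1 \<le> k"
    have "lam * i k = mu * c ^ k * d k" using k lpos by (simp add: i_def)
    hence "r * c ^ n * (real (n+1) * lam * i k) = r * c ^ n * (real (n+1) * (mu * c ^ k * d k))"
      by (simp add: algebra_simps)
    thus "r * c ^ n * ins_rate lam i n k = r * c ^ (n + k) * del_rate mu d (n + k) k"
      unfolding ins_rate_def del_rate_def by (simp add: power_add algebra_simps)
  qed
  show ?thesis
    unfolding Let_def c_def[symmetric] S_def[symmetric] lam_def[symmetric] i_def[symmetric]
    using lpos ipd lr by simp
qed

theorem proposition1:
  shows
  "(\<forall>(lam::real) (mu::real) i d q.
      lam > 0 \<and> mu > 0 \<and> pos_int_dist i \<and> pos_int_dist d \<and> d 1 > 0 \<and>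
      length_reversible lam mu i d q \<and> (\<forall>n. q n > 0) \<longrightarrow>
      (let r = 1 - lam * i 1 / (mu * d 1) in
         0 < r \<and> r < 1 \<and>
         (\<forall>x. q x = r * (1 - r) ^ x) \<and>
         (\<lambda>k. (1 - r) ^ k * d k) sums (lam / mu) \<and> lam / mu < 1 \<and>
         (\<forall>k\<ge>1. i k = mu / lam * (1 - r) ^ k * d k)))
   \<and>
   (\<forall>(r::real) d (mu::real).
      0 < r \<and> r < 1 \<and> pos_int_dist d \<and> d 1 > 0 \<and> mu > 0 \<longrightarrow>
      (let lam = mu * (\<Sum>k. (1 - r) ^ k * d k);
           i = (\<lambda>k. if k = 0 then 0 else mu / lam * (1 - r) ^ k * d k)
       in lam > 0 \<and> pos_int_dist i \<and>
          length_reversible lam mu i d (\<lambda>x. r * (1 - r) ^ x)))"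
  using part1 part2 by blast

end
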